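(* Let $\Omega$ be a singular verification operator for $|\Psi\rangle$ (i.e. its smallest eigenvalue is $0$) with second largest eigenvalue $\beta$, let $N\ge1$ be an integer, $\delta^*=\frac{1+N\beta}{N+1}$, and $1/(N+1)\le\delta\le\delta^*$. Then $$F(N,\delta,\Omega)\le1-\frac{1}{(N+1)\delta}.$$
   Context: Let $\mathcal H$ be a Hilbert space of finite dimension $D\ge2$ and $|\Psi\rangle\in\mathcal H$ a unit vector. A verification operator for $|\Psi\rangle$ is a Hermitian operator $\Omega$ on $\mathcal H$ with $0\le\Omega\le1$, $\Omega|\Psi\rangle=|\Psi\rangle$, whose eigenvalue $1$ is nondegenerate. For a density operator $\rho$ on $\mathcal H^{\otimes(N+1)}$ put $p_\rho=\mathrm{tr}[(\Omega^{\otimes N}\otimes1)\rho]$, $f_\rho=\mathrm{tr}[(\Omega^{\otimes N}\otimes|\Psi\rangle\langle\Psi|)\rho]$, and $F(N,\delta,\Omega)=\min\{f_\rho/p_\rho:p_\rho\ge\delta\}$, the minimum over permutation-invariant density operators on $\mathcal H^{\otimes(N+1)}$. *)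

theory Defs
  imports Complex_Main "Jordan_Normal_Form.Char_Poly" "HOL-Combinatorics.Permutations"
begin

text \<open>The Hilbert space H is C^D (vectors/matrices of dimension D, Jordan_Normal_Form).
  Operators on the tensor power H^(n) are represented by their matrix entries with respect
  to the product basis, indexed by lists xs of length n with entries < D.\<close>

definition tuples :: "nat \<Rightarrow> nat \<Rightarrow> nat list set" where
  "tuples D n = {xs. length xs = n \<and> (\<forall>x\<in>set xs. x < D)}"

definition hermitian_mat :: "nat \<Rightarrow> complex mat \<Rightarrow> bool" where
  "hermitian_mat D A \<longleftrightarrow> A \<in> carrier_mat D D \<and>
     (\<forall>i<D. \<forall>j<D. A $$ (j, i) = cnj (A $$ (i, j)))"

definition psd_mat :: "nat \<Rightarrow> complex mat \<Rightarrow> bool" where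
  "psd_mat D A \<longleftrightarrow> hermitian_mat D A \<and>
     (\<forall>v \<in> carrier_vec D. 0 \<le> Re (\<Sum>i<D. \<Sum>j<D. cnj (v $ i) * A $$ (i, j) * v $ j))"

definition is_unit_state :: "nat \<Rightarrow> complex vec \<Rightarrow> bool" where
  "is_unit_state D \<Psi> \<longleftrightarrow> \<Psi> \<in> carrier_vec D \<and> (\<Sum>i<D. (cmod (\<Psi> $ i))\<^sup>2) = 1"

definition verification_operator :: "nat \<Rightarrow> complex mat \<Rightarrow> complex vec \<Rightarrow> bool" where
  "verification_operator D \<Omega> \<Psi> \<longleftrightarrow>
     hermitian_mat D \<Omega> \<and> psd_mat D \<Omega> \<and> psd_mat D (1\<^sub>m D - \<Omega>) \<and>
     \<Omega> *\<^sub>v \<Psi> = \<Psi> \<and>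
     (\<forall>v \<in> carrier_vec D. \<Omega> *\<^sub>v v = v \<longrightarrow> (\<exists>c. v = c \<cdot>\<^sub>v \<Psi>))"

definition density_op :: "nat \<Rightarrow> nat \<Rightarrow> (nat list \<Rightarrow> nat list \<Rightarrow> complex) \<Rightarrow> bool" where
  "density_op D n \<rho> \<longleftrightarrow>
     (\<forall>xs\<in>tuples D n. \<forall>ys\<in>tuples D n. \<rho> ys xs = cnj (\<rho> xs ys)) \<and>
     (\<forall>v :: nat list \<Rightarrow> complex. 0 \<le> Re (\<Sum>xs\<in>tuples D n. \<Sum>ys\<in>tuples D n.
         cnj (v xs) * \<rho> xs ys * v ys)) \<and>
     (\<Sum>xs\<in>tuples D n. \<rho> xs xs) = 1"

definition perm_invariant :: "nat \<Rightarrow> nat \<Rightarrow> (nat list \<Rightarrow> nat list \<Rightarrow> complex) \<Rightarrow> bool" where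
  "perm_invariant D n \<rho> \<longleftrightarrow>
     (\<forall>\<sigma>. \<sigma> permutes {..<n} \<longrightarrow>
        (\<forall>xs\<in>tuples D n. \<forall>ys\<in>tuples D n. \<rho> (permute_list \<sigma> xs) (permute_list \<sigma> ys) = \<rho> xs ys))"

text \<open>p_rho = tr[(Omega^(N) (x) 1) rho] on H^(N+1).\<close>
definition p_val :: "nat \<Rightarrow> nat \<Rightarrow> complex mat \<Rightarrow> (nat list \<Rightarrow> nat list \<Rightarrow> complex) \<Rightarrow> real" where
  "p_val D N \<Omega> \<rho> = Re (\<Sum>xs\<in>tuples D (N+1). \<Sum>ys\<in>tuples D (N+1).
      (\<Prod>i<N. \<Omega> $$ (xs ! i, ys ! i)) * (if xs ! N = ys ! N then 1 else 0) * \<rho> ys xs)"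

text \<open>f_rho = tr[(Omega^(N) (x) |Psi><Psi|) rho] on H^(N+1).\<close>
definition f_val :: "nat \<Rightarrow> nat \<Rightarrow> complex mat \<Rightarrow> complex vec \<Rightarrow> (nat list \<Rightarrow> nat list \<Rightarrow> complex) \<Rightarrow> real" where
  "f_val D N \<Omega> \<Psi> \<rho> = Re (\<Sum>xs\<in>tuples D (N+1). \<Sum>ys\<in>tuples D (N+1).
      (\<Prod>i<N. \<Omega> $$ (xs ! i, ys ! i)) * (\<Psi> $ (xs ! N) * cnj (\<Psi> $ (ys ! N))) * \<rho> ys xs)"

text \<open>F(N, delta, Omega): the minimum (taken as infimum) of f_rho / p_rho over permutation-invariant
  density operators with p_rho >= delta.\<close>
definition F_fid :: "nat \<Rightarrow> nat \<Rightarrow> real \<Rightarrow> complex mat \<Rightarrow> complex vec \<Rightarrow> real" where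
  "F_fid D N \<delta> \<Omega> \<Psi> = Inf {f_val D N \<Omega> \<Psi> \<rho> / p_val D N \<Omega> \<rho> | \<rho>.
      density_op D (N+1) \<rho> \<and> perm_invariant D (N+1) \<rho> \<and> p_val D N \<Omega> \<rho> \<ge> \<delta>}"

end

theory Submission
  imports Defs
begin


lemma tuples_Suc: "tuples D (Suc n) = (\<lambda>(x,xs). x#xs) ` ({..<D} \<times> tuples D n)"
  unfolding tuples_def
  apply (auto simp: length_Suc_conv image_iff)
  done

lemma finite_tuples: "finite (tuples D n)"
proof -
  have "tuples D n = {xs. set xs \<subseteq> {..<D} \<and> length xs = n}" unfolding tuples_def by auto
  then show ?thesis using finite_lists_length_eq[of "{..<D}" n] by simp
qed

lemma sum_prod_tuples:
  "(\<Sum>xs\<in>tuples D n. \<Prod>i<n. h i (xs!i)) = (\<Prod>i<n. \<Sum>x<D. (h i x :: 'a::comm_semiring_1))"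
proof (induction n arbitrary: h)
  case 0
  have "tuples D 0 = {[]}" by (auto simp: tuples_def)
  then show ?case by simp
next
  case (Suc n)
  have inj: "inj_on (\<lambda>(x,xs). x#xs) ({..<D} \<times> tuples D n)" by (auto simp: inj_on_def)
  have "(\<Sum>xs\<in>tuples D (Suc n). \<Prod>i<Suc n. h i (xs!i))
      = (\<Sum>(x,xs)\<in>{..<D} \<times> tuples D n. \<Prod>i<Suc n. h i ((x#xs)!i))"
    unfolding tuples_Suc by (subst sum.reindex[OF inj]) (simp add: case_prod_unfold)
  also have "\<dots> = (\<Sum>(x,xs)\<in>{..<D} \<times> tuples D n. h 0 x * (\<Prod>i<n. h (Suc i) (xs!i)))"
    by (simp del: prod.lessThan_Suc add: prod.lessThan_Suc_shift)
  also have "\<dots> = (\<Sum>x<D. \<Sum>xs\<in>tuples D n. h 0 x * (\<Prod>i<n. h (Suc i) (xs!i)))"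
    by (simp add: sum.cartesian_product)
  also have "\<dots> = (\<Sum>x<D. h 0 x) * (\<Sum>xs\<in>tuples D n. (\<Prod>i<n. h (Suc i) (xs!i)))"
    by (rule sum_product[symmetric])
  also have "\<dots> = (\<Sum>x<D. h 0 x) * (\<Prod>i<n. \<Sum>x<D. h (Suc i) x)"
    using Suc[of "\<lambda>i. h (Suc i)"] by simp
  also have "\<dots> = (\<Prod>i<Suc n. \<Sum>x<D. h i x)"
    by (simp del: prod.lessThan_Suc add: prod.lessThan_Suc_shift)
  finally show ?case .
qed

lemma sum2_prod_tuples:
  "(\<Sum>xs\<in>tuples D n. \<Sum>ys\<in>tuples D n. \<Prod>i<n. h i (xs!i) (ys!i))
    = (\<Prod>i<n. \<Sum>x<D. \<Sum>y<D. (h i x y :: 'a::comm_semiring_1))"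
proof -
  have "(\<Sum>ys\<in>tuples D n. \<Prod>i<n. h i (xs!i) (ys!i)) = (\<Prod>i<n. \<Sum>y<D. h i (xs!i) y)" for xs
    by (rule sum_prod_tuples)
  then have "(\<Sum>xs\<in>tuples D n. \<Sum>ys\<in>tuples D n. \<Prod>i<n. h i (xs!i) (ys!i))
     = (\<Sum>xs\<in>tuples D n. \<Prod>i<n. \<Sum>y<D. h i (xs!i) y)" by simp
  also have "\<dots> = (\<Prod>i<n. \<Sum>x<D. \<Sum>y<D. h i x y)"
    by (rule sum_prod_tuples)
  finally show ?thesis .
qed

lemma swap4:
  "(\<Sum>x\<in>A. \<Sum>y\<in>B. \<Sum>k\<in>C. \<Sum>l\<in>E. f x y k l) = (\<Sum>k\<in>C. \<Sum>l\<in>E. \<Sum>x\<in>A. \<Sum>y\<in>B. f x y k l)"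
proof -
  have "(\<Sum>x\<in>A. \<Sum>y\<in>B. \<Sum>k\<in>C. \<Sum>l\<in>E. f x y k l) = (\<Sum>x\<in>A. \<Sum>k\<in>C. \<Sum>y\<in>B. \<Sum>l\<in>E. f x y k l)"
    by (rule sum.cong[OF refl], rule sum.swap)
  also have "\<dots> = (\<Sum>x\<in>A. \<Sum>k\<in>C. \<Sum>l\<in>E. \<Sum>y\<in>B. f x y k l)"
    by (rule sum.cong[OF refl], rule sum.cong[OF refl], rule sum.swap)
  also have "\<dots> = (\<Sum>k\<in>C. \<Sum>x\<in>A. \<Sum>l\<in>E. \<Sum>y\<in>B. f x y k l)"
    by (rule sum.swap)
  also have "\<dots> = (\<Sum>k\<in>C. \<Sum>l\<in>E. \<Sum>x\<in>A. \<Sum>y\<in>B. f x y k l)"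
    by (rule sum.cong[OF refl], rule sum.swap)
  finally show ?thesis .
qed

lemma pure_expand:
  fixes a g :: "nat \<Rightarrow> nat \<Rightarrow> nat \<Rightarrow> complex"
  shows "(\<Sum>xs\<in>tuples D n. \<Sum>ys\<in>tuples D n. (\<Prod>i<n. a i (xs!i) (ys!i)) *
            ((\<Sum>l<n. \<Prod>i<n. g l i (ys!i)) * cnj (\<Sum>k<n. \<Prod>i<n. g k i (xs!i))))
    = (\<Sum>k<n. \<Sum>l<n. \<Prod>i<n. \<Sum>x<D. \<Sum>y<D. cnj (g k i x) * a i x y * g l i y)"
proof -
  have e: "(\<Prod>i<n. a i (xs!i) (ys!i)) *
            ((\<Sum>l<n. \<Prod>i<n. g l i (ys!i)) * cnj (\<Sum>k<n. \<Prod>i<n. g k i (xs!i)))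
     = (\<Sum>k<n. \<Sum>l<n. \<Prod>i<n. cnj (g k i (xs!i)) * a i (xs!i) (ys!i) * g l i (ys!i))" for xs ys
    by (simp add: cnj_sum cnj_prod sum_distrib_left sum_distrib_right prod.distrib mult_ac)
  have "(\<Sum>xs\<in>tuples D n. \<Sum>ys\<in>tuples D n. (\<Prod>i<n. a i (xs!i) (ys!i)) *
            ((\<Sum>l<n. \<Prod>i<n. g l i (ys!i)) * cnj (\<Sum>k<n. \<Prod>i<n. g k i (xs!i))))
     = (\<Sum>k<n. \<Sum>l<n. \<Sum>xs\<in>tuples D n. \<Sum>ys\<in>tuples D n. \<Prod>i<n. cnj (g k i (xs!i)) * a i (xs!i) (ys!i) * g l i (ys!i))"
    unfolding e by (rule swap4)
  also have "\<dots> = (\<Sum>k<n. \<Sum>l<n. \<Prod>i<n. \<Sum>x<D. \<Sum>y<D. cnj (g k i x) * a i x y * g l i y)"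
    by (rule sum.cong[OF refl], rule sum.cong[OF refl], rule sum2_prod_tuples)
  finally show ?thesis .
qed



lemma phi_perm:
  fixes G :: "bool \<Rightarrow> nat \<Rightarrow> complex"
  assumes s: "\<sigma> permutes {..<n}" and xs: "length xs = n"
  shows "(\<Sum>k<n. \<Prod>i<n. G (i = k) (permute_list \<sigma> xs ! i)) = (\<Sum>k<n. \<Prod>i<n. G (i = k) (xs ! i))"
proof -
  have bij: "bij_betw \<sigma> {..<n} {..<n}" using permutes_imp_bij[OF s] .
  have inj: "inj \<sigma>" using permutes_inj[OF s] .
  have "(\<Prod>i<n. G (i = k) (permute_list \<sigma> xs ! i)) = (\<Prod>i<n. G (\<sigma> i = \<sigma> k) (xs ! \<sigma> i))" for k
    using s xs inj by (intro prod.cong refl) (auto simp: permute_list_nth inj_eq)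
  also have "\<dots>k = (\<Prod>j<n. G (j = \<sigma> k) (xs ! j))" for k
    using prod.reindex_bij_betw[OF bij, of "\<lambda>j. G (j = \<sigma> k) (xs ! j)"] .
  finally have "(\<Sum>k<n. \<Prod>i<n. G (i = k) (permute_list \<sigma> xs ! i)) = (\<Sum>k<n. \<Prod>j<n. G (j = \<sigma> k) (xs ! j))"
    by simp
  also have "\<dots> = (\<Sum>k<n. \<Prod>i<n. G (i = k) (xs ! i))"
    using sum.reindex_bij_betw[OF bij, of "\<lambda>k. \<Prod>j<n. G (j = k) (xs ! j)"] .
  finally show ?thesis .
qed

lemma prod_eq_indicator:
  assumes "length xs = n" "length ys = n"
  shows "(\<Prod>i<n. (if xs ! i = ys ! i then 1 else 0 :: complex)) = (if xs = ys then 1 else 0)"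
proof (cases "xs = ys")
  case True then show ?thesis by simp
next
  case False
  then obtain i where "i < n" "xs ! i \<noteq> ys ! i" using assms nth_equalityI by metis
  then have "(\<Prod>i<n. (if xs ! i = ys ! i then 1 else 0 :: complex)) = 0"
    by (intro prod_zero) auto
  then show ?thesis using False by simp
qed



lemma density_diag:
  assumes d: "density_op D n \<rho>" and xs: "xs \<in> tuples D n"
  shows "Im (\<rho> xs xs) = 0" "0 \<le> Re (\<rho> xs xs)" "Re (\<rho> xs xs) \<le> 1"
proof -
  have psd: "0 \<le> Re (\<Sum>a\<in>tuples D n. \<Sum>b\<in>tuples D n. cnj (v a) * \<rho> a b * v b)" for v
    using d unfolding density_op_def by blast
  have nn: "0 \<le> Re (\<rho> x x)" if x: "x \<in> tuples D n" for x
  proof -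
    have e: "(\<Sum>a\<in>tuples D n. \<Sum>b\<in>tuples D n. cnj (if a = x then 1 else 0) * \<rho> a b * (if b = x then 1 else 0))
       = (\<Sum>a\<in>tuples D n. cnj (if a = x then 1 else 0) * (\<Sum>b\<in>tuples D n. \<rho> a b * (if b = x then 1 else 0)))"
      by (simp add: sum_distrib_left mult.assoc)
    also have "\<dots> = (\<Sum>a\<in>tuples D n. cnj (if a = x then 1 else 0) * \<rho> a x)"
    proof (rule sum.cong[OF refl])
      fix a
      have "(\<Sum>b\<in>tuples D n. \<rho> a b * (if b = x then 1 else 0)) = (\<Sum>b\<in>tuples D n. if b = x then \<rho> a b else 0)"
        by (rule sum.cong) auto
      also have "\<dots> = \<rho> a x" using x finite_tuples by simp
      finally show "cnj (if a = x then 1 else 0) * (\<Sum>b\<in>tuples D n. \<rho> a b * (if b = x then 1 else 0)) = cnj (if a = x then 1 else 0) * \<rho> a x" by simp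
    qed
    also have "\<dots> = (\<Sum>a\<in>tuples D n. (if a = x then \<rho> a x else 0))"
      by (rule sum.cong) auto
    also have "\<dots> = \<rho> x x" using x finite_tuples by simp
    finally have e: "(\<Sum>a\<in>tuples D n. \<Sum>b\<in>tuples D n. cnj (if a = x then 1 else 0) * \<rho> a b * (if b = x then 1 else 0))
       = \<rho> x x" .
    show ?thesis using psd[of "\<lambda>a. if a = x then 1 else 0"] e by simp
  qed
  have h: "\<rho> xs xs = cnj (\<rho> xs xs)" using d xs unfolding density_op_def by blast
  then have "Im (\<rho> xs xs) = Im (cnj (\<rho> xs xs))" by (rule arg_cong)
  then show "Im (\<rho> xs xs) = 0" by simp
  show "0 \<le> Re (\<rho> xs xs)" using nn xs .
  have tr: "(\<Sum>x\<in>tuples D n. Re (\<rho> x x)) = 1"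
    using d unfolding density_op_def by (metis Re_sum one_complex.sel(1))
  have "Re (\<rho> xs xs) \<le> (\<Sum>x\<in>tuples D n. Re (\<rho> x x))"
    by (rule member_le_sum) (use nn xs finite_tuples in auto)
  then show "Re (\<rho> xs xs) \<le> 1" using tr by simp
qed

lemma two_point:
  fixes \<rho> :: "nat list \<Rightarrow> nat list \<Rightarrow> complex" and S :: "nat list set" and u :: complex
  assumes fin: "finite S" and x: "x \<in> S" and y: "y \<in> S" and xy: "x \<noteq> y"
  defines "v \<equiv> \<lambda>a. (if a = x then 1 else 0) - (if a = y then u else 0)"
  shows "(\<Sum>a\<in>S. \<Sum>b\<in>S. cnj (v a) * \<rho> a b * v b)
     = \<rho> x x - \<rho> x y * u - cnj u * \<rho> y x + cnj u * u * \<rho> y y"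
proof -
  have inner: "(\<Sum>b\<in>S. \<rho> a b * v b) = \<rho> a x - \<rho> a y * u" for a
  proof -
    have "(\<Sum>b\<in>S. \<rho> a b * v b) = (\<Sum>b\<in>S. (if b = x then \<rho> a b else 0) - (if b = y then \<rho> a b * u else 0))"
      unfolding v_def by (rule sum.cong) (auto simp: right_diff_distrib)
    also have "\<dots> = \<rho> a x - \<rho> a y * u" using fin x y by (simp add: sum_subtractf)
    finally show ?thesis .
  qed
  have "(\<Sum>a\<in>S. \<Sum>b\<in>S. cnj (v a) * \<rho> a b * v b) = (\<Sum>a\<in>S. cnj (v a) * (\<rho> a x - \<rho> a y * u))"
    by (simp add: sum_distrib_left mult.assoc inner[symmetric])
  also have "\<dots> = (\<Sum>a\<in>S. (if a = x then (\<rho> a x - \<rho> a y * u) else 0) - (if a = y then cnj u * (\<rho> a x - \<rho> a y * u) else 0))"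
    unfolding v_def using xy by (intro sum.cong) (auto simp: left_diff_distrib)
  also have "\<dots> = (\<rho> x x - \<rho> x y * u) - cnj u * (\<rho> y x - \<rho> y y * u)"
    using fin x y by (simp add: sum_subtractf)
  finally show ?thesis by (simp add: algebra_simps)
qed

lemma density_bound:
  assumes d: "density_op D n \<rho>" and x: "x \<in> tuples D n" and y: "y \<in> tuples D n"
  shows "cmod (\<rho> x y) \<le> 1"
proof (cases "x = y")
  case True
  then show ?thesis using density_diag[OF d x] by (simp add: cmod_eq_Re)
next
  case xy: False
  show ?thesis
  proof (cases "\<rho> x y = 0")
    case True then show ?thesis by simp
  next
    case False
    define r where "r = cmod (\<rho> x y)"
    have r: "r > 0" using False r_def by simp
    define u where "u = cnj (\<rho> x y) / of_real r"
    have hyx: "\<rho> y x = cnj (\<rho> x y)" using d x y unfolding density_op_def by blast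
    have sq: "\<rho> x y * cnj (\<rho> x y) = of_real (r^2)" unfolding r_def
      by (metis complex_norm_square of_real_power)
    have e1: "\<rho> x y * u = of_real r" unfolding u_def using sq r
      by (simp add: field_simps power2_eq_square)
    have e2: "cnj u * \<rho> y x = of_real r" unfolding u_def hyx using sq r
      by (simp add: field_simps power2_eq_square mult.commute)
    have e3: "cnj u * u = 1" unfolding u_def using sq r
      by (simp add: field_simps power2_eq_square mult.commute)
    have psd: "0 \<le> Re (\<Sum>a\<in>tuples D n. \<Sum>b\<in>tuples D n. cnj (w a) * \<rho> a b * w b)" for w
      using d unfolding density_op_def by blast
    have "0 \<le> Re (\<rho> x x - \<rho> x y * u - cnj u * \<rho> y x + cnj u * u * \<rho> y y)"
      using psd[of "\<lambda>a. (if a = x then 1 else 0) - (if a = y then u else 0)"]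
        two_point[OF finite_tuples x y xy, where \<rho>=\<rho> and u=u] by (simp only:)
    then have "0 \<le> Re (\<rho> x x) - 2 * r + Re (\<rho> y y)" using e1 e2 e3 by simp
    then show ?thesis using density_diag[OF d x] density_diag[OF d y] r_def by simp
  qed
qed



definition Bf :: "nat \<Rightarrow> (nat \<Rightarrow> nat \<Rightarrow> complex) \<Rightarrow> (nat \<Rightarrow> complex) \<Rightarrow> (nat \<Rightarrow> complex) \<Rightarrow> complex" where
  "Bf D a u v = (\<Sum>x<D. \<Sum>y<D. cnj (u x) * a x y * v y)"

definition ipf :: "nat \<Rightarrow> (nat \<Rightarrow> complex) \<Rightarrow> (nat \<Rightarrow> complex) \<Rightarrow> complex" where
  "ipf D u v = (\<Sum>x<D. cnj (u x) * v x)"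

lemma Bf_eig:
  assumes "\<forall>x<D. (\<Sum>y<D. a x y * v y) = m * v x"
  shows "Bf D a u v = m * ipf D u v"
proof -
  have "Bf D a u v = (\<Sum>x<D. cnj (u x) * (\<Sum>y<D. a x y * v y))"
    unfolding Bf_def by (simp add: sum_distrib_left mult.assoc)
  also have "\<dots> = (\<Sum>x<D. m * (cnj (u x) * v x))" using assms by (intro sum.cong) auto
  finally show ?thesis unfolding ipf_def by (simp add: sum_distrib_left)
qed

lemma Bf_id: "Bf D (\<lambda>x y. if x = y then 1 else 0) u v = ipf D u v"
proof -
  have "\<forall>x<D. (\<Sum>y<D. (if x = y then 1 else 0) * v y) = 1 * v x"
  proof (intro allI impI)
    fix x assume "x < D"
    have "(\<Sum>y<D. (if x = y then 1 else 0) * v y) = (\<Sum>y<D. if x = y then v y else 0)"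
      by (rule sum.cong) auto
    then show "(\<Sum>y<D. (if x = y then 1 else 0) * v y) = 1 * v x" using \<open>x < D\<close> by simp
  qed
  from Bf_eig[OF this] show ?thesis by simp
qed

lemma Bf_proj: "Bf D (\<lambda>x y. p x * cnj (p y)) u v = ipf D u p * ipf D (\<lambda>y. p y) v"
  unfolding Bf_def ipf_def by (simp add: sum_product mult_ac)

lemma diag_sum:
  fixes M :: "nat \<Rightarrow> nat \<Rightarrow> nat \<Rightarrow> complex"
  assumes off: "\<forall>k<n. \<forall>l<n. k \<noteq> l \<longrightarrow> M k l k = 0"
    and dg: "\<forall>k<n. \<forall>i<n. M k k i = (if i = k then d k else 1)"
  shows "(\<Sum>k<n. \<Sum>l<n. \<Prod>i<n. M k l i) = (\<Sum>k<n. d k)"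
proof (rule sum.cong[OF refl])
  fix k assume k: "k \<in> {..<n}"
  have "(\<Sum>l<n. \<Prod>i<n. M k l i) = (\<Sum>l<n. if l = k then (\<Prod>i<n. M k k i) else 0)"
  proof (rule sum.cong[OF refl])
    fix l assume l: "l \<in> {..<n}"
    show "(\<Prod>i<n. M k l i) = (if l = k then (\<Prod>i<n. M k k i) else 0)"
    proof (cases "l = k")
      case False
      have "(\<Prod>i<n. M k l i) = 0"
        by (rule prod_zero) (use off k l False in auto)
      then show ?thesis using False by simp
    qed simp
  qed
  also have "\<dots> = (\<Prod>i<n. M k k i)" using k by simp
  also have "\<dots> = (\<Prod>i<n. if i = k then d k else 1)" using dg k by (intro prod.cong) auto
  also have "\<dots> = d k" using k by simp
  finally show "(\<Sum>l<n. \<Prod>i<n. M k l i) = d k" .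
qed



lemma pure_val:
  fixes Om E :: "nat \<Rightarrow> nat \<Rightarrow> complex" and psi w :: "nat \<Rightarrow> complex"
  assumes Om_psi: "\<forall>x<D. (\<Sum>y<D. Om x y * psi y) = 1 * psi x"
  and Om_w: "\<forall>x<D. (\<Sum>y<D. Om x y * w y) = \<mu> * w x"
  and pp: "ipf D psi psi = 1" and ww: "ipf D w w = 1" and wp: "ipf D w psi = 0"
  and E0: "Bf D E w psi = 0" and E1: "Bf D E psi psi = 1" and E2: "Bf D E w w = c"
  shows "(\<Sum>xs\<in>tuples D (Suc N). \<Sum>ys\<in>tuples D (Suc N).
     ((\<Prod>i<N. Om (xs!i) (ys!i)) * E (xs!N) (ys!N)) *
     ((\<Sum>l<Suc N. \<Prod>i<Suc N. (if i = l then w else psi) (ys!i)) *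
      cnj (\<Sum>k<Suc N. \<Prod>i<Suc N. (if i = k then w else psi) (xs!i))))
    = of_nat N * \<mu> + c"
proof -
  define a where "a i = (if i < N then Om else E)" for i
  define g where "g k i = (if i = k then w else psi)" for k i :: nat
  have prodeq: "(\<Prod>i<N. Om (xs!i) (ys!i)) * E (xs!N) (ys!N) = (\<Prod>i<Suc N. a i (xs!i) (ys!i))" for xs ys :: "nat list"
    unfolding a_def by (simp add: prod.lessThan_Suc)
  have "(\<Sum>xs\<in>tuples D (Suc N). \<Sum>ys\<in>tuples D (Suc N).
     ((\<Prod>i<N. Om (xs!i) (ys!i)) * E (xs!N) (ys!N)) *
     ((\<Sum>l<Suc N. \<Prod>i<Suc N. (if i = l then w else psi) (ys!i)) *
      cnj (\<Sum>k<Suc N. \<Prod>i<Suc N. (if i = k then w else psi) (xs!i))))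
    = (\<Sum>xs\<in>tuples D (Suc N). \<Sum>ys\<in>tuples D (Suc N). (\<Prod>i<Suc N. a i (xs!i) (ys!i)) *
            ((\<Sum>l<Suc N. \<Prod>i<Suc N. g l i (ys!i)) * cnj (\<Sum>k<Suc N. \<Prod>i<Suc N. g k i (xs!i))))"
    unfolding prodeq g_def ..
  also have "\<dots> = (\<Sum>k<Suc N. \<Sum>l<Suc N. \<Prod>i<Suc N. Bf D (a i) (g k i) (g l i))"
    unfolding Bf_def by (rule pure_expand)
  also have "\<dots> = (\<Sum>k<Suc N. if k < N then \<mu> else c)"
  proof (rule diag_sum)
    show "\<forall>k<Suc N. \<forall>l<Suc N. k \<noteq> l \<longrightarrow> Bf D (a k) (g k k) (g l k) = 0"
      using Bf_eig[OF Om_psi] wp E0 unfolding a_def g_def by auto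
    show "\<forall>k<Suc N. \<forall>i<Suc N. Bf D (a i) (g k i) (g k i) = (if i = k then (if k < N then \<mu> else c) else 1)"
      using Bf_eig[OF Om_psi] Bf_eig[OF Om_w] pp ww E1 E2 unfolding a_def g_def by auto
  qed
  also have "\<dots> = of_nat N * \<mu> + c" by simp
  finally show ?thesis .
qed



lemma mat_vec_sum:
  assumes "A \<in> carrier_mat D D" "v \<in> carrier_vec D" "x < D"
  shows "(A *\<^sub>v v) $ x = (\<Sum>y<D. A $$ (x,y) * v $ y)"
  using assms by (simp add: scalar_prod_def atLeast0LessThan)

lemma id_apply: "x < (D::nat) \<Longrightarrow> (\<Sum>y<D. (if x = y then 1 else 0) * v y) = (v x :: complex)"
proof -
  assume x: "x < D"
  have "(\<Sum>y<D. (if x = y then 1 else 0) * v y) = (\<Sum>y<D. if x = y then v y else 0)"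
    by (rule sum.cong) auto
  also have "\<dots> = v x" using x by (simp add: sum.delta')
  finally show ?thesis .
qed

lemma unit_eigen:
  assumes A: "A \<in> carrier_mat D D" and ev: "eigenvalue A \<mu>"
  shows "\<exists>w. (\<forall>x<D. (\<Sum>y<D. A $$ (x,y) * w y) = \<mu> * w x) \<and> ipf D w w = 1"
proof -
  obtain v where v: "v \<in> carrier_vec D" "v \<noteq> 0\<^sub>v D" "A *\<^sub>v v = \<mu> \<cdot>\<^sub>v v"
    using ev A unfolding eigenvalue_def eigenvector_def by auto
  define s where "s = (\<Sum>x<D. (cmod (v $ x))\<^sup>2)"
  obtain x0 where x0: "x0 < D" "v $ x0 \<noteq> 0"
  proof -
    have "\<exists>x<D. v $ x \<noteq> 0"
    proof (rule ccontr)
      assume "\<not> ?thesis"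
      then have "v = 0\<^sub>v D" using v(1) by (intro eq_vecI) auto
      then show False using v(2) by simp
    qed
    then show ?thesis using that by blast
  qed
  have "(cmod (v $ x0))\<^sup>2 \<le> s" unfolding s_def
    by (rule member_le_sum) (use x0 in auto)
  moreover have "(cmod (v $ x0))\<^sup>2 > 0" using x0 by simp
  ultimately have s: "s > 0" by linarith
  define w where "w x = v $ x / of_real (sqrt s)" for x
  have evw: "(\<Sum>y<D. A $$ (x,y) * w y) = \<mu> * w x" if x: "x < D" for x
  proof -
    have "(\<Sum>y<D. A $$ (x,y) * w y) = (\<Sum>y<D. A $$ (x,y) * v $ y) / of_real (sqrt s)"
      unfolding w_def by (simp add: sum_divide_distrib)
    also have "(\<Sum>y<D. A $$ (x,y) * v $ y) = (A *\<^sub>v v) $ x"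
      using mat_vec_sum[OF A v(1) x] by simp
    also have "\<dots> = \<mu> * v $ x" using v(3) v(1) x by simp
    finally show ?thesis unfolding w_def by simp
  qed
  have nw: "ipf D w w = 1"
  proof -
    have "ipf D w w = (\<Sum>x<D. of_real ((cmod (v $ x))\<^sup>2) / of_real s)"
      unfolding ipf_def w_def using s
    proof (intro sum.cong refl)
      fix x
      have rr: "complex_of_real (sqrt s) * complex_of_real (sqrt s) = complex_of_real s"
        using s by (simp flip: of_real_mult)
      have cc: "cnj (v $ x) * v $ x = complex_of_real ((cmod (v $ x))\<^sup>2)"
        using complex_norm_square[of "v $ x"] by (simp add: mult.commute)
      show "cnj (v $ x / complex_of_real (sqrt s)) * (v $ x / complex_of_real (sqrt s)) =
         complex_of_real ((cmod (v $ x))\<^sup>2) / complex_of_real s"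
      proof -
        have "cnj (v $ x / complex_of_real (sqrt s)) * (v $ x / complex_of_real (sqrt s))
           = (cnj (v $ x) * v $ x) / (complex_of_real (sqrt s) * complex_of_real (sqrt s))"
          by simp
        then show ?thesis unfolding rr cc .
      qed
    qed
    also have "\<dots> = (\<Sum>x<D. of_real ((cmod (v $ x))\<^sup>2)) / of_real s"
      by (rule sum_divide_distrib[symmetric])
    also have "\<dots> = of_real s / of_real s"
      unfolding s_def by (simp only: of_real_sum)
    also have "\<dots> = 1" using s by simp
    finally show ?thesis .
  qed
  show ?thesis by (rule exI[of _ w]) (use evw nw in simp)
qed



lemma orth:
  fixes Om :: "nat \<Rightarrow> nat \<Rightarrow> complex"
  assumes herm: "\<forall>x<D. \<forall>y<D. Om y x = cnj (Om x y)"
  and Om_psi: "\<forall>x<D. (\<Sum>y<D. Om x y * psi y) = 1 * psi x"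
  and Om_w: "\<forall>x<D. (\<Sum>y<D. Om x y * w y) = \<mu> * w x"
  and real: "cnj \<mu> = \<mu>" and ne: "\<mu> \<noteq> 1"
  shows "ipf D w psi = 0"
proof -
  have b1: "Bf D Om w psi = ipf D w psi" using Bf_eig[OF Om_psi] by simp
  have b2: "Bf D Om w psi = (\<Sum>y<D. (\<Sum>x<D. cnj (w x) * Om x y) * psi y)"
    unfolding Bf_def by (subst sum.swap) (simp add: sum_distrib_right)
  have b3: "(\<Sum>x<D. cnj (w x) * Om x y) = \<mu> * cnj (w y)" if y: "y < D" for y
  proof -
    have "(\<Sum>x<D. cnj (w x) * Om x y) = cnj (\<Sum>x<D. Om y x * w x)"
    proof -
      have "(\<Sum>x<D. cnj (w x) * Om x y) = (\<Sum>x<D. cnj (Om y x * w x))"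
      proof (rule sum.cong[OF refl])
        fix x assume "x \<in> {..<D}"
        then have xD: "x < D" by simp
        have "Om x y = cnj (Om y x)" using herm[rule_format, OF y xD] .
        then show "cnj (w x) * Om x y = cnj (Om y x * w x)" by (simp add: mult.commute)
      qed
      then show ?thesis by (simp add: cnj_sum)
    qed
    also have "\<dots> = cnj (\<mu> * w y)" using Om_w y by simp
    finally show ?thesis using real by simp
  qed
  have "ipf D w psi = (\<Sum>y<D. (\<Sum>x<D. cnj (w x) * Om x y) * psi y)" using b1 b2 by simp
  also have "\<dots> = (\<Sum>y<D. \<mu> * (cnj (w y) * psi y))" by (rule sum.cong) (auto simp: b3)
  also have "\<dots> = \<mu> * ipf D w psi" unfolding ipf_def by (simp add: sum_distrib_left)
  finally have "ipf D w psi = \<mu> * ipf D w psi" .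
  then have "(1 - \<mu>) * ipf D w psi = 0" by (simp add: algebra_simps)
  then show ?thesis using ne by simp
qed



lemma state_vals:
  fixes Om :: "nat \<Rightarrow> nat \<Rightarrow> complex" and psi w :: "nat \<Rightarrow> complex" and N :: nat
  assumes Om_psi: "\<forall>x<D. (\<Sum>y<D. Om x y * psi y) = 1 * psi x"
  and Om_w: "\<forall>x<D. (\<Sum>y<D. Om x y * w y) = \<mu> * w x"
  and pp: "ipf D psi psi = 1" and ww: "ipf D w w = 1" and wp: "ipf D w psi = 0"
  defines "phi \<equiv> \<lambda>xs. (\<Sum>k<Suc N. \<Prod>i<Suc N. (if i = k then w else psi) (xs!i))"
  shows "(\<Sum>xs\<in>tuples D (Suc N). \<Sum>ys\<in>tuples D (Suc N).
     (\<Prod>i<N. Om (xs!i) (ys!i)) * (if xs!N = ys!N then 1 else 0) * (phi ys * cnj (phi xs)))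
    = of_nat N * \<mu> + 1"
  and "(\<Sum>xs\<in>tuples D (Suc N). \<Sum>ys\<in>tuples D (Suc N).
     (\<Prod>i<N. Om (xs!i) (ys!i)) * (psi (xs!N) * cnj (psi (ys!N))) * (phi ys * cnj (phi xs)))
    = of_nat N * \<mu>"
  and "(\<Sum>xs\<in>tuples D (Suc N). phi xs * cnj (phi xs)) = of_nat (Suc N)"
proof -
  have pw: "ipf D psi w = 0"
  proof -
    have "ipf D psi w = cnj (ipf D w psi)" unfolding ipf_def by (simp add: cnj_sum mult.commute)
    then show ?thesis using wp by simp
  qed
  show "(\<Sum>xs\<in>tuples D (Suc N). \<Sum>ys\<in>tuples D (Suc N).
     (\<Prod>i<N. Om (xs!i) (ys!i)) * (if xs!N = ys!N then 1 else 0) * (phi ys * cnj (phi xs)))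
    = of_nat N * \<mu> + 1"
    unfolding phi_def
    by (rule pure_val[OF Om_psi Om_w pp ww wp, where E = "\<lambda>x y. if x = y then 1 else 0"])
       (simp_all add: Bf_id wp pp ww)
  show "(\<Sum>xs\<in>tuples D (Suc N). \<Sum>ys\<in>tuples D (Suc N).
     (\<Prod>i<N. Om (xs!i) (ys!i)) * (psi (xs!N) * cnj (psi (ys!N))) * (phi ys * cnj (phi xs)))
    = of_nat N * \<mu>"
    unfolding phi_def
    using pure_val[OF Om_psi Om_w pp ww wp, where E = "\<lambda>x y. psi x * cnj (psi y)" and c = 0]
    by (simp add: Bf_proj wp pp ww pw)
  have Id_psi: "\<forall>x<D. (\<Sum>y<D. (if x = y then 1 else 0) * psi y) = 1 * psi x" by (simp add: id_apply)
  have Id_w: "\<forall>x<D. (\<Sum>y<D. (if x = y then 1 else 0) * w y) = 1 * w x" by (simp add: id_apply)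
  have "(\<Sum>xs\<in>tuples D (Suc N). \<Sum>ys\<in>tuples D (Suc N).
     ((\<Prod>i<N. (if xs!i = ys!i then 1 else 0)) * (if xs!N = ys!N then 1 else 0)) * (phi ys * cnj (phi xs)))
    = of_nat N * 1 + 1"
    unfolding phi_def
    by (rule pure_val[OF Id_psi Id_w pp ww wp, where E = "\<lambda>x y. if x = y then 1 else 0"])
       (simp_all add: Bf_id wp pp ww)
  moreover have "(\<Sum>ys\<in>tuples D (Suc N).
     ((\<Prod>i<N. (if xs!i = ys!i then 1 else 0)) * (if xs!N = ys!N then 1 else 0)) * (phi ys * cnj (phi xs)))
     = phi xs * cnj (phi xs)" if xs: "xs \<in> tuples D (Suc N)" for xs
  proof -
    have "(\<Sum>ys\<in>tuples D (Suc N).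
     ((\<Prod>i<N. (if xs!i = ys!i then 1 else 0)) * (if xs!N = ys!N then 1 else 0)) * (phi ys * cnj (phi xs)))
      = (\<Sum>ys\<in>tuples D (Suc N). if xs = ys then phi ys * cnj (phi xs) else 0)"
    proof (rule sum.cong[OF refl])
      fix ys assume ys: "ys \<in> tuples D (Suc N)"
      have "(\<Prod>i<N. (if xs!i = ys!i then 1 else 0)) * (if xs!N = ys!N then 1 else 0)
          = (\<Prod>i<Suc N. (if xs!i = ys!i then 1 else 0 :: complex))" by simp
      also have "\<dots> = (if xs = ys then 1 else 0)"
        using xs ys by (intro prod_eq_indicator) (auto simp: tuples_def)
      finally show "((\<Prod>i<N. (if xs!i = ys!i then 1 else 0)) * (if xs!N = ys!N then 1 else 0)) * (phi ys * cnj (phi xs))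
        = (if xs = ys then phi ys * cnj (phi xs) else 0)" by simp
    qed
    also have "\<dots> = phi xs * cnj (phi xs)" using xs finite_tuples by simp
    finally show ?thesis .
  qed
  ultimately show "(\<Sum>xs\<in>tuples D (Suc N). phi xs * cnj (phi xs)) = of_nat (Suc N)" by simp
qed



lemma lin2:
  fixes A X0 X1 :: "'a \<Rightarrow> 'a \<Rightarrow> complex"
  shows "(\<Sum>x\<in>S. \<Sum>y\<in>S. A x y * (c0 * X0 x y + c1 * X1 x y))
    = c0 * (\<Sum>x\<in>S. \<Sum>y\<in>S. A x y * X0 x y) + c1 * (\<Sum>x\<in>S. \<Sum>y\<in>S. A x y * X1 x y)"
  by (simp add: distrib_left sum.distrib sum_distrib_left mult_ac)

lemma lin2':
  fixes v :: "'a \<Rightarrow> complex" and X0 X1 :: "'a \<Rightarrow> 'a \<Rightarrow> complex"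
  shows "(\<Sum>x\<in>S. \<Sum>y\<in>S. cnj (v x) * (c0 * X0 x y + c1 * X1 x y) * v y)
    = c0 * (\<Sum>x\<in>S. \<Sum>y\<in>S. cnj (v x) * X0 x y * v y) + c1 * (\<Sum>x\<in>S. \<Sum>y\<in>S. cnj (v x) * X1 x y * v y)"
  by (simp add: distrib_left distrib_right sum.distrib sum_distrib_left mult_ac)

lemma psd_pure:
  fixes v phi :: "'a \<Rightarrow> complex"
  shows "(\<Sum>a\<in>S. \<Sum>b\<in>S. cnj (v a) * (phi a * cnj (phi b)) * v b)
     = (\<Sum>a\<in>S. cnj (v a) * phi a) * cnj (\<Sum>a\<in>S. cnj (v a) * phi a)"
  by (simp add: cnj_sum sum_product mult_ac)

lemma Re_mult_cnj_nonneg: "0 \<le> Re (z * cnj z)"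
  by simp



theorem lemma8:
  fixes D N :: nat and \<Omega> :: "complex mat" and \<Psi> :: "complex vec" and \<beta> \<delta> :: real
  assumes "D \<ge> 2"
    and "is_unit_state D \<Psi>"
    and "verification_operator D \<Omega> \<Psi>"
    and "eigenvalue \<Omega> 0"
    and "eigenvalue \<Omega> (complex_of_real \<beta>)" and "\<beta> \<noteq> 1"
    and "\<forall>\<mu>. eigenvalue \<Omega> \<mu> \<and> \<mu> \<noteq> 1 \<longrightarrow> Re \<mu> \<le> \<beta>"
    and "N \<ge> 1"
    and "1 / real (N + 1) \<le> \<delta>"
    and "\<delta> \<le> (1 + real N * \<beta>) / real (N + 1)"
  shows "F_fid D N \<delta> \<Omega> \<Psi> \<le> 1 - 1 / (real (N + 1) * \<delta>)"
proof -
  have herm: "hermitian_mat D \<Omega>" and OmPsi: "\<Omega> *\<^sub>v \<Psi> = \<Psi>"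
    using assms(3) unfolding verification_operator_def by auto
  have carr: "\<Omega> \<in> carrier_mat D D" using herm unfolding hermitian_mat_def by auto
  have hermE: "\<forall>x<D. \<forall>y<D. \<Omega> $$ (y,x) = cnj (\<Omega> $$ (x,y))"
    using herm unfolding hermitian_mat_def by blast
  have Psi: "\<Psi> \<in> carrier_vec D" "(\<Sum>i<D. (cmod (\<Psi> $ i))\<^sup>2) = 1"
    using assms(2) unfolding is_unit_state_def by auto
  define psi where "psi = (\<lambda>x. \<Psi> $ x)"
  define Om where "Om = (\<lambda>x y. \<Omega> $$ (x,y))"
  have Om_psi: "\<forall>x<D. (\<Sum>y<D. Om x y * psi y) = 1 * psi x"
  proof (intro allI impI)
    fix x assume x: "x < D"
    have "(\<Sum>y<D. Om x y * psi y) = (\<Omega> *\<^sub>v \<Psi>) $ x"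
      using mat_vec_sum[OF carr Psi(1) x] unfolding Om_def psi_def by simp
    then show "(\<Sum>y<D. Om x y * psi y) = 1 * psi x" using OmPsi unfolding psi_def by simp
  qed
  have pp: "ipf D psi psi = 1"
  proof -
    have "ipf D psi psi = (\<Sum>x<D. complex_of_real ((cmod (\<Psi> $ x))\<^sup>2))"
      unfolding ipf_def psi_def
      by (intro sum.cong refl) (metis complex_norm_square mult.commute of_real_power)
    also have "\<dots> = complex_of_real (\<Sum>x<D. (cmod (\<Psi> $ x))\<^sup>2)" by (simp only: of_real_sum)
    finally show ?thesis using Psi(2) by simp
  qed
  have hermO: "\<forall>x<D. \<forall>y<D. Om y x = cnj (Om x y)" unfolding Om_def by (rule hermE)
  obtain w0 where w0: "\<forall>x<D. (\<Sum>y<D. Om x y * w0 y) = 0 * w0 x" "ipf D w0 w0 = 1"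
    using unit_eigen[OF carr assms(4)] unfolding Om_def by blast
  obtain w1 where w1: "\<forall>x<D. (\<Sum>y<D. Om x y * w1 y) = complex_of_real \<beta> * w1 x" "ipf D w1 w1 = 1"
    using unit_eigen[OF carr assms(5)] unfolding Om_def by blast
  have o0: "ipf D w0 psi = 0" by (rule orth[OF hermO Om_psi w0(1)]) auto
  have o1: "ipf D w1 psi = 0" by (rule orth[OF hermO Om_psi w1(1)]) (use assms(6) in auto)
  define phi0 where "phi0 xs = (\<Sum>k<Suc N. \<Prod>i<Suc N. (if i = k then w0 else psi) (xs!i))" for xs
  define phi1 where "phi1 xs = (\<Sum>k<Suc N. \<Prod>i<Suc N. (if i = k then w1 else psi) (xs!i))" for xs
  note S0 = state_vals[OF Om_psi w0(1) pp w0(2) o0, of N, folded phi0_def]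
  note S1 = state_vals[OF Om_psi w1(1) pp w1(2) o1, of N, folded phi1_def]
  have S0a: "(\<Sum>xs\<in>tuples D (Suc N). \<Sum>ys\<in>tuples D (Suc N).
     (\<Prod>i<N. \<Omega> $$ (xs!i, ys!i)) * (if xs!N = ys!N then 1 else 0) * (phi0 ys * cnj (phi0 xs)))
    = of_nat N * 0 + 1" using S0(1) unfolding Om_def by simp
  have S1a: "(\<Sum>xs\<in>tuples D (Suc N). \<Sum>ys\<in>tuples D (Suc N).
     (\<Prod>i<N. \<Omega> $$ (xs!i, ys!i)) * (if xs!N = ys!N then 1 else 0) * (phi1 ys * cnj (phi1 xs)))
    = of_nat N * complex_of_real \<beta> + 1" using S1(1) unfolding Om_def by simp
  have S0b: "(\<Sum>xs\<in>tuples D (Suc N). \<Sum>ys\<in>tuples D (Suc N).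
     (\<Prod>i<N. \<Omega> $$ (xs!i, ys!i)) * (\<Psi> $ (xs!N) * cnj (\<Psi> $ (ys!N))) * (phi0 ys * cnj (phi0 xs)))
    = of_nat N * 0" using S0(2) unfolding Om_def psi_def by simp
  have S1b: "(\<Sum>xs\<in>tuples D (Suc N). \<Sum>ys\<in>tuples D (Suc N).
     (\<Prod>i<N. \<Omega> $$ (xs!i, ys!i)) * (\<Psi> $ (xs!N) * cnj (\<Psi> $ (ys!N))) * (phi1 ys * cnj (phi1 xs)))
    = of_nat N * complex_of_real \<beta>" using S1(2) unfolding Om_def psi_def by simp
  have NS: "N + 1 = Suc N" by simp
  define M where "M = real N"
  have M1: "M \<ge> 1" using assms(8) unfolding M_def by simp
  have rN: "real (N + 1) = M + 1" unfolding M_def by simp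
  have d1: "1 / (M + 1) \<le> \<delta>" and d2: "\<delta> \<le> (1 + M * \<beta>) / (M + 1)"
    using assms(9,10) unfolding rN M_def by auto
  have dpos: "\<delta> > 0" using d1 M1 by (smt (verit) divide_pos_pos)
  have d1': "1 \<le> (M + 1) * \<delta>" using d1 M1 by (simp add: field_simps)
  have d2': "(M + 1) * \<delta> \<le> 1 + M * \<beta>" using d2 M1 by (simp add: field_simps)
  have bnn: "\<beta> \<ge> 0"
  proof (rule ccontr)
    assume "\<not> \<beta> \<ge> 0"
    then have "M * \<beta> < 0" using M1 by (simp add: mult_pos_neg)
    then show False using d1' d2' by linarith
  qed
  define t where "t = (if \<beta> = 0 then 0 else ((M + 1) * \<delta> - 1) / (M * \<beta>))"
  have K: "t * (M * \<beta>) = (M + 1) * \<delta> - 1"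
  proof (cases "\<beta> = 0")
    case True then show ?thesis using d1' d2' unfolding t_def by simp
  next
    case False
    then have "M * \<beta> > 0" using bnn M1 by simp
    then show ?thesis unfolding t_def using False M1 by simp
  qed
  have t0: "t \<ge> 0" unfolding t_def using d1' bnn M1 by simp
  have t1: "t \<le> 1"
  proof (cases "\<beta> = 0")
    case True then show ?thesis unfolding t_def by simp
  next
    case False
    then have "M * \<beta> > 0" using bnn M1 by simp
    then show ?thesis unfolding t_def using False d2' by (simp add: field_simps)
  qed
  define c0 where "c0 = (1 - t) / (M + 1)"
  define c1 where "c1 = t / (M + 1)"
  have c0: "c0 \<ge> 0" and c1: "c1 \<ge> 0" unfolding c0_def c1_def using t0 t1 M1 by auto
  have c0m: "c0 * (M + 1) = 1 - t" and c1m: "c1 * (M + 1) = t"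
    unfolding c0_def c1_def using M1 by auto
  define rho where "rho = (\<lambda>xs ys. complex_of_real c0 * (phi0 xs * cnj (phi0 ys))
                                + complex_of_real c1 * (phi1 xs * cnj (phi1 ys)))"
  have pv: "p_val D N \<Omega> rho = \<delta>"
  proof -
    have "p_val D N \<Omega> rho = Re (complex_of_real c0 * (of_nat N * 0 + 1) + complex_of_real c1 * (of_nat N * complex_of_real \<beta> + 1))"
      unfolding p_val_def rho_def NS lin2 S0a S1a ..
    also have "\<dots> = c0 + c1 * (M * \<beta> + 1)" unfolding M_def by simp
    also have "\<dots> = \<delta>"
    proof -
      have "(c0 + c1 * (M * \<beta> + 1)) * (M + 1) = c0 * (M + 1) + (c1 * (M + 1)) * (M * \<beta> + 1)"
        by (simp add: algebra_simps)
      also have "\<dots> = (1 - t) + t * (M * \<beta> + 1)" by (simp only: c0m c1m)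
      also have "\<dots> = 1 + t * (M * \<beta>)" by (simp add: algebra_simps)
      also have "\<dots> = \<delta> * (M + 1)" using K by (simp add: algebra_simps)
      finally show ?thesis using M1 by simp
    qed
    finally show ?thesis .
  qed
  have fv: "f_val D N \<Omega> \<Psi> rho = \<delta> - 1 / (M + 1)"
  proof -
    have "f_val D N \<Omega> \<Psi> rho = Re (complex_of_real c0 * (of_nat N * 0) + complex_of_real c1 * (of_nat N * complex_of_real \<beta>))"
      unfolding f_val_def rho_def NS lin2 S0b S1b ..
    also have "\<dots> = c1 * (M * \<beta>)" unfolding M_def by simp
    also have "\<dots> = \<delta> - 1 / (M + 1)"
    proof -
      have "c1 * (M * \<beta>) * (M + 1) = (c1 * (M + 1)) * (M * \<beta>)" by (simp add: algebra_simps)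
      also have "\<dots> = (M + 1) * \<delta> - 1" using c1m K by simp
      also have "\<dots> = (\<delta> - 1 / (M + 1)) * (M + 1)" using M1 by (simp add: algebra_simps)
      finally show ?thesis using M1 by simp
    qed
    finally show ?thesis .
  qed
  have dens: "density_op D (N + 1) rho"
    unfolding density_op_def NS
  proof (intro conjI allI ballI)
    fix xs ys assume "xs \<in> tuples D (Suc N)" "ys \<in> tuples D (Suc N)"
    show "rho ys xs = cnj (rho xs ys)" unfolding rho_def by (simp add: mult.commute)
  next
    fix v :: "nat list \<Rightarrow> complex"
    have "(\<Sum>xs\<in>tuples D (Suc N). \<Sum>ys\<in>tuples D (Suc N). cnj (v xs) * rho xs ys * v ys)
      = complex_of_real c0 * ((\<Sum>a\<in>tuples D (Suc N). cnj (v a) * phi0 a) * cnj (\<Sum>a\<in>tuples D (Suc N). cnj (v a) * phi0 a))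
      + complex_of_real c1 * ((\<Sum>a\<in>tuples D (Suc N). cnj (v a) * phi1 a) * cnj (\<Sum>a\<in>tuples D (Suc N). cnj (v a) * phi1 a))"
      unfolding rho_def lin2' psd_pure ..
    moreover have "0 \<le> Re (complex_of_real c0 * (z * cnj z) + complex_of_real c1 * (z' * cnj z'))" for z z'
      using c0 c1 by simp
    ultimately show "0 \<le> Re (\<Sum>xs\<in>tuples D (Suc N). \<Sum>ys\<in>tuples D (Suc N). cnj (v xs) * rho xs ys * v ys)"
      by (simp only:)
  next
    have "(\<Sum>xs\<in>tuples D (Suc N). rho xs xs)
       = complex_of_real c0 * (\<Sum>xs\<in>tuples D (Suc N). phi0 xs * cnj (phi0 xs))
       + complex_of_real c1 * (\<Sum>xs\<in>tuples D (Suc N). phi1 xs * cnj (phi1 xs))"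
      unfolding rho_def by (simp add: sum.distrib sum_distrib_left)
    also have "\<dots> = complex_of_real (c0 * (M + 1) + c1 * (M + 1))"
      unfolding S0(3) S1(3) M_def by (simp add: add.commute)
    also have "\<dots> = 1" unfolding c0m c1m by simp
    finally show "(\<Sum>xs\<in>tuples D (Suc N). rho xs xs) = 1" .
  qed
  have perm: "perm_invariant D (N + 1) rho"
    unfolding perm_invariant_def NS
  proof (intro allI impI ballI)
    fix \<sigma> xs ys assume s: "\<sigma> permutes {..<Suc N}" and xs: "xs \<in> tuples D (Suc N)" and ys: "ys \<in> tuples D (Suc N)"
    have "phi0 (permute_list \<sigma> zs) = phi0 zs" "phi1 (permute_list \<sigma> zs) = phi1 zs"
      if "zs \<in> tuples D (Suc N)" for zs
      unfolding phi0_def phi1_def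
      using phi_perm[OF s, of zs "\<lambda>b. if b then w0 else psi"] phi_perm[OF s, of zs "\<lambda>b. if b then w1 else psi"]
        that by (auto simp: tuples_def)
    then show "rho (permute_list \<sigma> xs) (permute_list \<sigma> ys) = rho xs ys"
      unfolding rho_def using xs ys by simp
  qed
  define Sset where "Sset = {f_val D N \<Omega> \<Psi> \<rho> / p_val D N \<Omega> \<rho> | \<rho>.
      density_op D (N+1) \<rho> \<and> perm_invariant D (N+1) \<rho> \<and> p_val D N \<Omega> \<rho> \<ge> \<delta>}"
  have mem: "f_val D N \<Omega> \<Psi> rho / p_val D N \<Omega> rho \<in> Sset"
    unfolding Sset_def using dens perm pv by auto
  define coef where "coef xs ys = (\<Prod>i<N. \<Omega> $$ (xs!i, ys!i)) * (\<Psi> $ (xs!N) * cnj (\<Psi> $ (ys!N)))" for xs ys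
  define C where "C = (\<Sum>xs\<in>tuples D (Suc N). \<Sum>ys\<in>tuples D (Suc N). cmod (coef xs ys))"
  have C0: "C \<ge> 0" unfolding C_def by (intro sum_nonneg) auto
  have fbound: "- C \<le> f_val D N \<Omega> \<Psi> \<rho>" if d: "density_op D (N+1) \<rho>" for \<rho>
  proof -
    have fv': "f_val D N \<Omega> \<Psi> \<rho> = Re (\<Sum>xs\<in>tuples D (Suc N). \<Sum>ys\<in>tuples D (Suc N). coef xs ys * \<rho> ys xs)"
      unfolding f_val_def coef_def NS ..
    have "cmod (\<Sum>xs\<in>tuples D (Suc N). \<Sum>ys\<in>tuples D (Suc N). coef xs ys * \<rho> ys xs)
        \<le> (\<Sum>xs\<in>tuples D (Suc N). cmod (\<Sum>ys\<in>tuples D (Suc N). coef xs ys * \<rho> ys xs))"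
      by (rule norm_sum)
    also have "\<dots> \<le> (\<Sum>xs\<in>tuples D (Suc N). \<Sum>ys\<in>tuples D (Suc N). cmod (coef xs ys * \<rho> ys xs))"
      by (intro sum_mono norm_sum)
    also have "\<dots> \<le> C" unfolding C_def
    proof (intro sum_mono)
      fix xs ys assume xs: "xs \<in> tuples D (Suc N)" and ys: "ys \<in> tuples D (Suc N)"
      have "cmod (\<rho> ys xs) \<le> 1" using density_bound[OF d] xs ys NS by simp
      then show "cmod (coef xs ys * \<rho> ys xs) \<le> cmod (coef xs ys)"
        by (simp add: norm_mult mult_left_le)
    qed
    finally have "cmod (\<Sum>xs\<in>tuples D (Suc N). \<Sum>ys\<in>tuples D (Suc N). coef xs ys * \<rho> ys xs) \<le> C" .
    then show ?thesis unfolding fv' using abs_Re_le_cmod by (smt (verit))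
  qed
  have bdd: "bdd_below Sset"
    unfolding bdd_below_def
  proof (intro exI ballI)
    fix x assume "x \<in> Sset"
    then obtain \<rho> where r: "x = f_val D N \<Omega> \<Psi> \<rho> / p_val D N \<Omega> \<rho>" "density_op D (N+1) \<rho>"
      "p_val D N \<Omega> \<rho> \<ge> \<delta>" unfolding Sset_def by auto
    have pp: "p_val D N \<Omega> \<rho> > 0" using r(3) dpos by linarith
    have "- C / \<delta> \<le> - C / p_val D N \<Omega> \<rho>"
      using divide_left_mono[OF r(3) C0] pp dpos by (simp add: mult_pos_pos)
    also have "\<dots> \<le> f_val D N \<Omega> \<Psi> \<rho> / p_val D N \<Omega> \<rho>"
      using divide_right_mono[OF fbound[OF r(2)]] pp by simp
    finally show "- C / \<delta> \<le> x" using r(1) by simp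
  qed
  have "F_fid D N \<delta> \<Omega> \<Psi> = Inf Sset" unfolding F_fid_def Sset_def ..
  also have "\<dots> \<le> f_val D N \<Omega> \<Psi> rho / p_val D N \<Omega> rho" by (rule cInf_lower[OF mem bdd])
  also have "\<dots> = (\<delta> - 1 / (M + 1)) / \<delta>" unfolding pv fv ..
  also have "\<dots> = 1 - 1 / (real (N + 1) * \<delta>)" unfolding rN using dpos by (simp add: diff_divide_distrib divide_divide_eq_left mult.commute)
  finally show ?thesis .
qed


end
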